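(* Let $V$ be a complex normed vector space, $x\in l^{\infty}(V)$ and $v\in V$. Then $x$ is strongly almost convergent to $v$ if and only if $p(x-\widetilde v)=0$.
   Context: $\mathbb{N}=\{1,2,3,\dots\}$. $l^{\infty}(V)$ is the space of bounded sequences $x=\{x_n\}_{n=1}^\infty$ in $V$ with norm $\|x\|_\infty=\sup_n\|x_n\|_V$. For $v\in V$, $\widetilde v=\{v,v,\dots\}$. $T$ is the left shift: $T\{x_1,x_2,\dots\}=\{x_2,x_3,\dots\}$. A Banach limit functional is a bounded linear functional $L$ on $l^\infty(V)$ with $\|L\|\le1$ and $L(Tx)=L(x)$ for all $x$. A sequence $x\in l^\infty(V)$ is strongly almost convergent to $v\in V$ if $L(x)=L(\widetilde v)$ for every Banach limit functional $L$. For $x\in l^\infty(V)$, $p(x):=\lim_{n\to\infty}\left(\sup_{j\in\mathbb{N}}\frac1n\left\|\sum_{i=0}^{n-1}x_{i+j}\right\|_V\right)$ (this limit exists). *)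

theory Defs
  imports "HOL-Analysis.Analysis"
begin

text \<open>Complex normed vector spaces (not in the distribution library):
  a real normed vector space with a compatible complex scalar multiplication
  (as in the AFP entry Complex_Bounded_Operators).\<close>

class complex_normed_vector = real_normed_vector +
  fixes cscale :: "complex \<Rightarrow> 'a \<Rightarrow> 'a"
  assumes cscale_add_right: "cscale a (x + y) = cscale a x + cscale a y"
    and cscale_add_left: "cscale (a + b) x = cscale a x + cscale b x"
    and cscale_cscale: "cscale a (cscale b x) = cscale (a * b) x"
    and cscale_one: "cscale 1 x = x"
    and cscale_of_real: "cscale (of_real r) x = scaleR r x"
    and norm_cscale: "norm (cscale a x) = cmod a * norm x"

text \<open>Sequences in V are indexed from 0 (x 0 plays the role of x_1).
  l^infty(V) is the set of sequences satisfying Bseq.\<close>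

definition sup_norm :: "(nat \<Rightarrow> 'a::real_normed_vector) \<Rightarrow> real" where
  "sup_norm x = (SUP n. norm (x n))"

definition lshift :: "(nat \<Rightarrow> 'a) \<Rightarrow> nat \<Rightarrow> 'a" where
  "lshift x = (\<lambda>n. x (Suc n))"

definition const_seq :: "'a \<Rightarrow> nat \<Rightarrow> 'a" where
  "const_seq v = (\<lambda>_. v)"

text \<open>A Banach limit functional: a complex-linear functional on l^infty(V)
  of norm at most 1, invariant under the left shift. Only its values on
  bounded sequences matter.\<close>

definition banach_limit_functional ::
  "((nat \<Rightarrow> 'a::complex_normed_vector) \<Rightarrow> complex) \<Rightarrow> bool" where
  "banach_limit_functional L \<longleftrightarrow>
     (\<forall>x y. Bseq x \<and> Bseq y \<longrightarrow> L (\<lambda>n. x n + y n) = L x + L y) \<and>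
     (\<forall>c x. Bseq x \<longrightarrow> L (\<lambda>n. cscale c (x n)) = c * L x) \<and>
     (\<forall>x. Bseq x \<longrightarrow> norm (L x) \<le> sup_norm x) \<and>
     (\<forall>x. Bseq x \<longrightarrow> L (lshift x) = L x)"

definition strongly_almost_convergent ::
  "(nat \<Rightarrow> 'a::complex_normed_vector) \<Rightarrow> 'a \<Rightarrow> bool" where
  "strongly_almost_convergent x v \<longleftrightarrow>
     (\<forall>L. banach_limit_functional L \<longrightarrow> L x = L (const_seq v))"

definition p_func :: "(nat \<Rightarrow> 'a::real_normed_vector) \<Rightarrow> real" where
  "p_func x = lim (\<lambda>n. (SUP j. norm (\<Sum>i<n. x (i + j))) / real n)"

end

theory Submission
  imports Defs "HOL-Library.Function_Algebras"
begin


definition sublin :: "'v::real_vector set \<Rightarrow> ('v \<Rightarrow> real) \<Rightarrow> bool" where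
  "sublin S r \<longleftrightarrow> (\<forall>a\<in>S. \<forall>b\<in>S. r (a + b) \<le> r a + r b) \<and> (\<forall>c>0. \<forall>a\<in>S. r (c *\<^sub>R a) \<le> c * r a)"

lemma sublin_add: "sublin S r \<Longrightarrow> a \<in> S \<Longrightarrow> b \<in> S \<Longrightarrow> r (a + b) \<le> r a + r b"
  by (simp add: sublin_def)

lemma sublin_scale: "sublin S r \<Longrightarrow> c > 0 \<Longrightarrow> a \<in> S \<Longrightarrow> r (c *\<^sub>R a) \<le> c * r a"
  by (simp add: sublin_def)

lemma sublin_scale_eq:
  assumes "subspace S" "sublin S r" "c > 0" "a \<in> S"
  shows "r (c *\<^sub>R a) = c * r a"
proof -
  have "r (inverse c *\<^sub>R (c *\<^sub>R a)) \<le> inverse c * r (c *\<^sub>R a)"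
    using assms by (intro sublin_scale) (auto simp: subspace_def)
  then have "r a \<le> inverse c * r (c *\<^sub>R a)" using assms(3) by simp
  then have "c * r a \<le> r (c *\<^sub>R a)" using assms(3)
    by (simp add: field_simps)
  with sublin_scale[OF assms(2-4)] show ?thesis by simp
qed

lemma sublin_zero:
  assumes "subspace S" "sublin S r"
  shows "r 0 = 0"
proof -
  have z: "0 \<in> S" using assms(1) by (simp add: subspace_def)
  have "r 0 \<le> r 0 + r 0" using sublin_add[OF assms(2) z z] by simp
  moreover have "r ((1/2) *\<^sub>R 0) \<le> (1/2) * r 0" by (rule sublin_scale[OF assms(2) _ z]) simp
  then have "r 0 \<le> (1/2) * r 0" by (simp only: scaleR_zero_right)
  ultimately show ?thesis by linarith
qed

lemma sublin_lower:
  assumes "subspace S" "sublin S r" "a \<in> S"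
  shows "- r (- a) \<le> r a"
proof -
  have "r (a + - a) \<le> r a + r (- a)"
    using assms by (intro sublin_add) (auto simp: subspace_neg)
  then show ?thesis using sublin_zero[OF assms(1,2)] by simp
qed

definition adj :: "'v::real_vector set \<Rightarrow> ('v \<Rightarrow> real) \<Rightarrow> 'v \<Rightarrow> 'v \<Rightarrow> real" where
  "adj S r a z = (if z \<in> S then (INF t\<in>{0..}. r (z + t *\<^sub>R a) - t * r a) else 0)"

lemma adj_lowerb:
  assumes "subspace S" "sublin S r" "a \<in> S" "z \<in> S" "t \<ge> 0"
  shows "- r (- z) \<le> r (z + t *\<^sub>R a) - t * r a"
proof -
  have "r ((z + t *\<^sub>R a) + - z) \<le> r (z + t *\<^sub>R a) + r (- z)"
    using assms by (intro sublin_add) (auto simp: subspace_neg subspace_add subspace_scale)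
  moreover have "r (t *\<^sub>R a) = t * r a"
  proof (cases "t = 0")
    case True then show ?thesis using sublin_zero[OF assms(1,2)] by simp
  next
    case False then show ?thesis using sublin_scale_eq[OF assms(1,2) _ assms(3)] assms(5) by simp
  qed
  ultimately show ?thesis by simp
qed

lemma adj_bdd:
  assumes "subspace S" "sublin S r" "a \<in> S" "z \<in> S"
  shows "bdd_below ((\<lambda>t. r (z + t *\<^sub>R a) - t * r a) ` {0..})"
  using adj_lowerb[OF assms] by (intro bdd_belowI2[where m="- r (- z)"]) auto

lemma adj_le:
  assumes "subspace S" "sublin S r" "a \<in> S" "z \<in> S" "t \<ge> 0"
  shows "adj S r a z \<le> r (z + t *\<^sub>R a) - t * r a"
  unfolding adj_def using assms adj_bdd[OF assms(1-4)] by (auto intro: cINF_lower)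

lemma adj_ge:
  assumes "subspace S" "sublin S r" "a \<in> S" "z \<in> S"
    and "\<And>t. t \<ge> 0 \<Longrightarrow> m \<le> r (z + t *\<^sub>R a) - t * r a"
  shows "m \<le> adj S r a z"
  unfolding adj_def using assms by (auto intro: cINF_greatest)

lemma adj_le_self:
  assumes "subspace S" "sublin S r" "a \<in> S" "z \<in> S"
  shows "adj S r a z \<le> r z"
  using adj_le[OF assms, of 0] by simp

lemma adj_neg:
  assumes "subspace S" "sublin S r" "a \<in> S"
  shows "adj S r a (- a) \<le> - r a"
  using adj_le[OF assms(1-3) _, of "- a" 1] assms sublin_zero[OF assms(1,2)]
  by (simp add: subspace_neg)

lemma adj_sublin:
  assumes S: "subspace S" and r: "sublin S r" and a: "a \<in> S"
  shows "sublin S (adj S r a)"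
  unfolding sublin_def
proof (intro conjI ballI allI impI)
  fix z w assume z: "z \<in> S" and w: "w \<in> S"
  have zw: "z + w \<in> S" using S z w by (simp add: subspace_add)
  have key: "adj S r a (z + w) - (r (w + t *\<^sub>R a) - t * r a) \<le> r (z + s *\<^sub>R a) - s * r a"
    if s: "s \<ge> 0" and t: "t \<ge> 0" for s t
  proof -
    have "adj S r a (z + w) \<le> r ((z + w) + (s + t) *\<^sub>R a) - (s + t) * r a"
      using adj_le[OF S r a zw] s t by simp
    also have "(z + w) + (s + t) *\<^sub>R a = (z + s *\<^sub>R a) + (w + t *\<^sub>R a)"
      by (simp add: algebra_simps)
    also have "r \<dots> \<le> r (z + s *\<^sub>R a) + r (w + t *\<^sub>R a)"
      using S z w a by (intro sublin_add[OF r]) (auto simp: subspace_add subspace_scale)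
    finally show ?thesis by (simp add: algebra_simps)
  qed
  have "adj S r a (z + w) - (r (w + t *\<^sub>R a) - t * r a) \<le> adj S r a z" if t: "t \<ge> 0" for t
    by (rule adj_ge[OF S r a z]) (use key t in auto)
  then have "adj S r a (z + w) - adj S r a z \<le> r (w + t *\<^sub>R a) - t * r a" if "t \<ge> 0" for t
    using that by fastforce
  then have "adj S r a (z + w) - adj S r a z \<le> adj S r a w"
    by (intro adj_ge[OF S r a w])
  then show "adj S r a (z + w) \<le> adj S r a z + adj S r a w" by simp
next
  fix c :: real and z assume c: "c > 0" and z: "z \<in> S"
  have cz: "c *\<^sub>R z \<in> S" using S z by (simp add: subspace_scale)
  have "adj S r a (c *\<^sub>R z) / c \<le> r (z + t *\<^sub>R a) - t * r a" if t: "t \<ge> 0" for t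
  proof -
    have "adj S r a (c *\<^sub>R z) \<le> r (c *\<^sub>R z + (c * t) *\<^sub>R a) - (c * t) * r a"
      using adj_le[OF S r a cz] c t by simp
    also have "c *\<^sub>R z + (c * t) *\<^sub>R a = c *\<^sub>R (z + t *\<^sub>R a)" by (simp add: algebra_simps)
    also have "r \<dots> \<le> c * r (z + t *\<^sub>R a)"
      using S z a c by (intro sublin_scale[OF r]) (auto simp: subspace_add subspace_scale)
    finally have "adj S r a (c *\<^sub>R z) \<le> c * (r (z + t *\<^sub>R a) - t * r a)"
      by (simp add: algebra_simps)
    then show ?thesis using c by (simp add: field_simps)
  qed
  then have "adj S r a (c *\<^sub>R z) / c \<le> adj S r a z"
    by (intro adj_ge[OF S r a z])
  then show "adj S r a (c *\<^sub>R z) \<le> c * adj S r a z" using c by (simp add: field_simps)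
qed



lemma hb_minimal:
  fixes q0 :: "'v::real_vector \<Rightarrow> real"
  assumes S: "subspace S" and q0: "sublin S q0"
  shows "\<exists>m. sublin S m \<and> (\<forall>z\<in>S. m z \<le> q0 z) \<and>
     (\<forall>r. sublin S r \<and> (\<forall>z\<in>S. r z \<le> m z) \<longrightarrow> (\<forall>z\<in>S. r z = m z))"
proof -
  define A where "A = {r. sublin S r \<and> (\<forall>z. z \<notin> S \<longrightarrow> r z = 0) \<and> (\<forall>z\<in>S. r z \<le> q0 z)}"
  define P where "P = (\<lambda>r1 r2 :: 'v \<Rightarrow> real. \<forall>z\<in>S. r2 z \<le> r1 z)"
  define e where "e = (\<lambda>r z. if z \<in> S then r z else (0::real))"
  have sublin_e: "sublin S (e r)" if "sublin S r" for r
    using that S by (auto simp: sublin_def e_def subspace_add subspace_scale)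
  have q0A: "e q0 \<in> A" using sublin_e[OF q0] by (auto simp: A_def e_def)
  have po: "partial_order_on A (relation_of P A)"
    by (rule partial_order_on_relation_ofI) (auto simp: P_def A_def fun_eq_iff intro: order_trans, metis order.antisym)
  have "\<exists>m\<in>A. \<forall>a\<in>A. P m a \<longrightarrow> a = m"
  proof (rule predicate_Zorn[OF po])
    fix C assume C: "C \<in> Chains (relation_of P A)"
    then have CA: "C \<subseteq> A" by (rule Chains_relation_of)
    have comp: "\<And>r1 r2. r1 \<in> C \<Longrightarrow> r2 \<in> C \<Longrightarrow> P r1 r2 \<or> P r2 r1"
      using C unfolding Chains_def relation_of_def by auto
    show "\<exists>u\<in>A. \<forall>a\<in>C. P a u"
    proof (cases "C = {}")
      case True then show ?thesis using q0A by auto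
    next
      case False
      define u where "u = (\<lambda>z. if z \<in> S then (INF r\<in>C. r z) else 0)"
      have lb: "- q0 (- z) \<le> r z" if "r \<in> C" "z \<in> S" for r z
      proof -
        have rA: "r \<in> A" using that CA by auto
        have "- r (- z) \<le> r z" using sublin_lower[OF S _ that(2)] rA by (auto simp: A_def)
        moreover have "r (- z) \<le> q0 (- z)" using rA that(2) S by (auto simp: A_def subspace_neg)
        ultimately show ?thesis by linarith
      qed
      have bdd: "bdd_below ((\<lambda>r. r z) ` C)" if "z \<in> S" for z
        using lb[OF _ that] by (intro bdd_belowI2) auto
      have u_le: "u z \<le> r z" if "r \<in> C" "z \<in> S" for r z
        unfolding u_def using that bdd[OF that(2)] by (auto intro: cINF_lower)
      have u_ge: "m \<le> u z" if "z \<in> S" "\<And>r. r \<in> C \<Longrightarrow> m \<le> r z" for m z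
        unfolding u_def using that False by (auto intro: cINF_greatest)
      have "sublin S u"
        unfolding sublin_def
      proof (intro conjI ballI allI impI)
        fix a b assume a: "a \<in> S" and b: "b \<in> S"
        have ab: "a + b \<in> S" using S a b by (simp add: subspace_add)
        have *: "u (a + b) \<le> r1 a + r2 b" if r1: "r1 \<in> C" and r2: "r2 \<in> C" for r1 r2
        proof -
          have s1: "sublin S r1" and s2: "sublin S r2" using r1 r2 CA by (auto simp: A_def)
          from comp[OF r1 r2] show ?thesis
          proof
            assume "P r1 r2"
            then have "r2 a \<le> r1 a" using a by (auto simp: P_def)
            moreover have "u (a + b) \<le> r2 (a + b)" using u_le[OF r2 ab] .
            moreover have "r2 (a + b) \<le> r2 a + r2 b" using sublin_add[OF s2 a b] .
            ultimately show ?thesis by linarith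
          next
            assume "P r2 r1"
            then have "r1 b \<le> r2 b" using b by (auto simp: P_def)
            moreover have "u (a + b) \<le> r1 (a + b)" using u_le[OF r1 ab] .
            moreover have "r1 (a + b) \<le> r1 a + r1 b" using sublin_add[OF s1 a b] .
            ultimately show ?thesis by linarith
          qed
        qed
        have "u (a + b) - r2 b \<le> u a" if r2: "r2 \<in> C" for r2
          by (rule u_ge[OF a]) (use *[OF _ r2] in force)
        then have "u (a + b) - u a \<le> u b"
          by (intro u_ge[OF b]) force
        then show "u (a + b) \<le> u a + u b" by simp
      next
        fix c :: real and a assume c: "c > 0" and a: "a \<in> S"
        have ca: "c *\<^sub>R a \<in> S" using S a by (simp add: subspace_scale)
        have "u (c *\<^sub>R a) / c \<le> r a" if r: "r \<in> C" for r
        proof -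
          have "sublin S r" using r CA by (auto simp: A_def)
          then have "r (c *\<^sub>R a) \<le> c * r a" using c a by (rule sublin_scale)
          with u_le[OF r ca] have "u (c *\<^sub>R a) \<le> c * r a" by linarith
          then show ?thesis using c by (simp add: field_simps)
        qed
        then have "u (c *\<^sub>R a) / c \<le> u a" by (intro u_ge[OF a])
        then show "u (c *\<^sub>R a) \<le> c * u a" using c by (simp add: field_simps)
      qed
      moreover have "\<forall>z\<in>S. u z \<le> q0 z"
      proof
        fix z assume z: "z \<in> S"
        obtain r where r: "r \<in> C" using False by auto
        then show "u z \<le> q0 z" using u_le[OF r z] CA z by (force simp: A_def)
      qed
      ultimately have "u \<in> A" by (auto simp: A_def u_def)
      moreover have "\<forall>a\<in>C. P a u" using u_le by (auto simp: P_def)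
      ultimately show ?thesis by blast
    qed
  qed
  then obtain m where mA: "m \<in> A" and mmax: "\<And>a. a \<in> A \<Longrightarrow> P m a \<Longrightarrow> a = m" by blast
  show ?thesis
  proof (intro exI conjI allI impI ballI)
    show "sublin S m" using mA by (simp add: A_def)
    fix z assume "z \<in> S" then show "m z \<le> q0 z" using mA by (simp add: A_def)
  next
    fix r z assume r: "sublin S r \<and> (\<forall>z\<in>S. r z \<le> m z)" and z: "z \<in> S"
    have "e r \<in> A" using r sublin_e mA by (force simp: A_def e_def)
    moreover have "P m (e r)" using r by (simp add: P_def e_def)
    ultimately have "e r = m" by (rule mmax)
    then show "r z = m z" using z by (metis e_def)
  qed
qed



lemma hahn_banach_point:
  fixes q :: "'v::real_vector \<Rightarrow> real"
  assumes S: "subspace S" and q: "sublin S q" and y: "y \<in> S"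
  shows "\<exists>f. (\<forall>a\<in>S. \<forall>b\<in>S. f (a + b) = f a + f b) \<and> (\<forall>c. \<forall>a\<in>S. f (c *\<^sub>R a) = c * f a)
     \<and> (\<forall>a\<in>S. f a \<le> q a) \<and> f y = q y"
proof -
  have q0: "sublin S (adj S q y)" by (rule adj_sublin[OF S q y])
  obtain m where m: "sublin S m" and mq0: "\<forall>z\<in>S. m z \<le> adj S q y z"
    and mmin: "\<And>r. sublin S r \<and> (\<forall>z\<in>S. r z \<le> m z) \<Longrightarrow> (\<forall>z\<in>S. r z = m z)"
    using hb_minimal[OF S q0] by blast
  have neg: "m (- a) = - m a" if a: "a \<in> S" for a
  proof -
    have "\<forall>z\<in>S. adj S m a z = m z"
      using adj_sublin[OF S m a] adj_le_self[OF S m a] by (intro mmin) blast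
    then have "m (- a) \<le> - m a" using adj_neg[OF S m a] a S by (metis subspace_neg)
    moreover have "- m (- a) \<le> m a" by (rule sublin_lower[OF S m a])
    ultimately show ?thesis by linarith
  qed
  have add: "m (a + b) = m a + m b" if a: "a \<in> S" and b: "b \<in> S" for a b
  proof -
    have "m (a + b) \<le> m a + m b" by (rule sublin_add[OF m a b])
    moreover have "m (- a + - b) \<le> m (- a) + m (- b)"
      using S a b by (intro sublin_add[OF m]) (auto simp: subspace_neg)
    then have "m (- (a + b)) \<le> m (- a) + m (- b)" by (simp only: minus_add_distrib)
    moreover have "m (- (a + b)) = - m (a + b)" using S a b by (intro neg) (simp add: subspace_add)
    ultimately show ?thesis using neg[OF a] neg[OF b] by linarith
  qed
  have scale: "m (c *\<^sub>R a) = c * m a" if a: "a \<in> S" for c a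
  proof (cases "c > 0")
    case True show ?thesis using sublin_scale_eq[OF S m True a] .
  next
    case False
    show ?thesis
    proof (cases "c = 0")
      case True then show ?thesis using sublin_zero[OF S m] by simp
    next
      case False2: False
      with False have c: "- c > 0" by simp
      have "c *\<^sub>R a = - ((- c) *\<^sub>R a)" by simp
      then have "m (c *\<^sub>R a) = - m ((- c) *\<^sub>R a)" using S a by (metis neg subspace_scale)
      also have "\<dots> = c * m a" using sublin_scale_eq[OF S m c a] by simp
      finally show ?thesis .
    qed
  qed
  have mq: "m a \<le> q a" if "a \<in> S" for a
    using mq0 adj_le_self[OF S q y] that by (meson order_trans)
  have "m (- y) \<le> - q y"
    using mq0 adj_neg[OF S q y] y S by (meson order_trans subspace_neg)
  then have "m y = q y" using neg[OF y] mq[OF y] by linarith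
  then show ?thesis using add scale mq by blast
qed



instantiation "fun" :: (type, real_vector) real_vector
begin
definition scaleR_fun_def: "scaleR r f = (\<lambda>x. r *\<^sub>R f x)"
instance by standard (simp_all add: scaleR_fun_def fun_eq_iff scaleR_add_right scaleR_add_left)
end

lemma scaleR_fun_apply [simp]: "(r *\<^sub>R f) x = r *\<^sub>R f x"
  by (simp add: scaleR_fun_def)

lemma minus_fun_apply' [simp]: "(f - g) x = f x - g x" by simp
lemma uminus_fun_apply' [simp]: "(- f) x = - f x" by simp



lemma cscale_zero_right [simp]: "cscale a (0::'a::complex_normed_vector) = 0"
proof -
  have "cscale a (0::'a) = cscale a (0 + 0)" by (simp only: add_0)
  also have "\<dots> = cscale a 0 + cscale a 0" by (rule cscale_add_right)
  finally show ?thesis by simp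
qed

lemma cscale_minus_right: "cscale a (x - y :: 'a::complex_normed_vector) = cscale a x - cscale a y"
proof -
  have "cscale a (x - y) + cscale a y = cscale a x"
    using cscale_add_right[of a "x - y" y] by simp
  then show ?thesis by (simp add: eq_diff_eq)
qed

lemma cscale_sum: "cscale a (sum f A :: 'a::complex_normed_vector) = (\<Sum>i\<in>A. cscale a (f i))"
  by (induction A rule: infinite_finite_induct) (simp_all add: cscale_add_right)

lemma cscale_Complex: "cscale (Complex a b) (v :: 'a::complex_normed_vector) = a *\<^sub>R v + b *\<^sub>R cscale \<i> v"
proof -
  have "Complex a b = complex_of_real a + complex_of_real b * \<i>" by (simp add: complex_eq_iff)
  then have "cscale (Complex a b) v = cscale (complex_of_real a) v + cscale (complex_of_real b * \<i>) v"
    by (simp only: cscale_add_left)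
  also have "cscale (complex_of_real b * \<i>) v = cscale (complex_of_real b) (cscale \<i> v)"
    by (simp only: cscale_cscale)
  finally show ?thesis by (simp only: cscale_of_real)
qed

definition asum :: "nat \<Rightarrow> nat \<Rightarrow> (nat \<Rightarrow> 'a::real_normed_vector) \<Rightarrow> 'a" where
  "asum n j y = (\<Sum>i<n. y (i + j))"
definition aa :: "nat \<Rightarrow> (nat \<Rightarrow> 'a::real_normed_vector) \<Rightarrow> real" where
  "aa n y = (SUP j. norm (asum n j y))"
definition ss :: "nat \<Rightarrow> (nat \<Rightarrow> 'a::real_normed_vector) \<Rightarrow> real" where
  "ss n y = aa n y / real n"

lemma p_func_ss: "p_func y = lim (\<lambda>n. ss n y)"
  by (simp add: p_func_def ss_def aa_def asum_def)

lemma asum_bound: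
  assumes "\<And>m. norm (y m) \<le> B"
  shows "norm (asum n j y) \<le> real n * B"
proof -
  have "norm (asum n j y) \<le> (\<Sum>i<n. norm (y (i + j)))" unfolding asum_def by (rule norm_sum)
  also have "\<dots> \<le> (\<Sum>i<n. B)" by (rule sum_mono) (rule assms)
  finally show ?thesis by simp
qed

lemma bdd_aa:
  assumes "\<And>m. norm (y m) \<le> B"
  shows "bdd_above (range (\<lambda>j. norm (asum n j y)))"
  using asum_bound[OF assms] by (intro bdd_aboveI2) auto

lemma aa_upper:
  assumes "\<And>m. norm (y m) \<le> B"
  shows "norm (asum n j y) \<le> aa n y"
  unfolding aa_def by (rule cSUP_upper[OF _ bdd_aa[OF assms]]) simp

lemma aa_least:
  assumes "\<And>j. norm (asum n j y) \<le> M"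
  shows "aa n y \<le> M"
  unfolding aa_def by (rule cSUP_least) (use assms in auto)

lemma aa_le:
  assumes "\<And>m. norm (y m) \<le> B"
  shows "aa n y \<le> real n * B"
  by (rule aa_least[OF asum_bound[OF assms]])

lemma aa_nonneg:
  assumes "\<And>m. norm (y m) \<le> B"
  shows "0 \<le> aa n y"
  by (rule order_trans[OF norm_ge_zero aa_upper[OF assms, of n 0]])

lemma ss_nonneg:
  assumes "\<And>m. norm (y m) \<le> B"
  shows "0 \<le> ss n y"
  using aa_nonneg[OF assms] by (simp add: ss_def)

lemma asum_add: "asum (m + n) j y = asum m j y + asum n (j + m) y"
proof (induction n)
  case 0 then show ?case by (simp add: asum_def)
next
  case (Suc n)
  have 1: "asum (m + Suc n) j y = asum (m + n) j y + y (m + n + j)" by (simp add: asum_def)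
  have 2: "asum (Suc n) (j + m) y = asum n (j + m) y + y (n + (j + m))" by (simp add: asum_def)
  have 3: "m + n + j = n + (j + m)" by simp
  show ?case unfolding 1 2 3 Suc by (simp add: add.assoc)
qed

lemma aa_add:
  assumes "\<And>m. norm (y m) \<le> B"
  shows "aa (m + n) y \<le> aa m y + aa n y"
proof (rule aa_least)
  fix j
  have "norm (asum (m + n) j y) \<le> norm (asum m j y) + norm (asum n (j + m) y)"
    unfolding asum_add by (rule norm_triangle_ineq)
  also have "\<dots> \<le> aa m y + aa n y" using aa_upper[OF assms] by (intro add_mono) auto
  finally show "norm (asum (m + n) j y) \<le> aa m y + aa n y" .
qed

lemma aa_mult:
  assumes "\<And>m. norm (y m) \<le> B"
  shows "aa (q * k + r) y \<le> real q * aa k y + aa r y"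
proof (induction q)
  case 0 then show ?case by simp
next
  case (Suc q)
  have "aa (Suc q * k + r) y = aa (k + (q * k + r)) y" by (simp add: add_ac)
  also have "\<dots> \<le> aa k y + aa (q * k + r) y" by (rule aa_add[OF assms])
  also have "\<dots> \<le> aa k y + (real q * aa k y + aa r y)" using Suc by simp
  finally show ?case by (simp add: algebra_simps)
qed

lemma ss_conv:
  assumes "Bseq y"
  shows "(\<lambda>n. ss n y) \<longlonglongrightarrow> (INF k\<in>{1..}. ss k y)"
proof -
  obtain B where B0: "B > 0" and B: "\<And>m. norm (y m) \<le> B"
    using assms by (auto elim: BseqE)
  define l where "l = (INF k\<in>{1..}. ss k y)"
  have bdd: "bdd_below ((\<lambda>k. ss k y) ` {1..})"
    using ss_nonneg[OF B] by (intro bdd_belowI2) auto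
  have lle: "l \<le> ss n y" if "n \<ge> 1" for n
    unfolding l_def using that bdd by (auto intro: cINF_lower)
  show ?thesis unfolding l_def[symmetric] LIMSEQ_iff
  proof (intro allI impI)
    fix e :: real assume e: "e > 0"
    have "l < l + e / 2" using e by simp
    then obtain k where k: "k \<ge> 1" and sk: "ss k y < l + e / 2"
      unfolding l_def by (subst (asm) cINF_less_iff[OF _ bdd]) auto
    define N where "N = nat \<lceil>2 * real k * B / e\<rceil> + 1"
    have "\<forall>n\<ge>N. norm (ss n y - l) < e"
    proof (intro allI impI)
      fix n assume n: "n \<ge> N"
      have n1: "n \<ge> 1" using n by (simp add: N_def)
      have npos: "real n > 0" using n1 by simp
      have "real n > 2 * real k * B / e"
        using n unfolding N_def by linarith
      then have kbn: "real k * B / real n < e / 2"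
        using npos e by (simp add: field_simps)
      have "aa n y = aa ((n div k) * k + n mod k) y" by simp
      also have "\<dots> \<le> real (n div k) * aa k y + aa (n mod k) y" by (rule aa_mult[OF B])
      also have "aa (n mod k) y \<le> real k * B"
      proof -
        have "aa (n mod k) y \<le> real (n mod k) * B" by (rule aa_le[OF B])
        also have "\<dots> \<le> real k * B"
          using k B0 by (intro mult_right_mono) (simp_all add: less_imp_le_nat)
        finally show ?thesis .
      qed
      finally have an: "aa n y \<le> real (n div k) * aa k y + real k * B" by simp
      have "real (n div k) * real k \<le> real n"
        by (metis div_times_less_eq_dividend of_nat_le_iff of_nat_mult)
      then have "(real (n div k) * real k) * aa k y \<le> real n * aa k y"
        by (rule mult_right_mono[OF _ aa_nonneg[OF B]])
      then have h: "real (n div k) * aa k y / real n \<le> ss k y"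
        using npos k unfolding ss_def by (simp add: divide_simps mult_ac)
      have "ss n y \<le> (real (n div k) * aa k y + real k * B) / real n"
        unfolding ss_def using an npos by (intro divide_right_mono) simp_all
      also have "\<dots> = real (n div k) * aa k y / real n + real k * B / real n"
        by (rule add_divide_distrib)
      finally have "ss n y \<le> ss k y + real k * B / real n" using h by linarith
      then have "ss n y - l < e" using sk kbn lle[OF n1] by linarith
      then show "norm (ss n y - l) < e" using lle[OF n1] by simp
    qed
    then show "\<exists>no. \<forall>n\<ge>no. norm (ss n y - l) < e" by blast
  qed
qed

lemma p_func_tendsto:
  assumes "Bseq y"
  shows "(\<lambda>n. ss n y) \<longlonglongrightarrow> p_func y"
proof -
  have "p_func y = (INF k\<in>{1..}. ss k y)" unfolding p_func_ss using ss_conv[OF assms] by (rule limI)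
  then show ?thesis using ss_conv[OF assms] by simp
qed



lemma Bseq_plus: "Bseq x \<Longrightarrow> Bseq y \<Longrightarrow> Bseq (\<lambda>n. x n + y n :: 'a::real_normed_vector)"
proof -
  assume "Bseq x" "Bseq y"
  then obtain K1 K2 where "\<forall>n. norm (x n) \<le> K1" "\<forall>n. norm (y n) \<le> K2" by (auto elim!: BseqE)
  then show ?thesis by (intro BseqI'[where K="K1 + K2"]) (meson add_mono norm_triangle_le)
qed

lemma Bseq_cscale: "Bseq x \<Longrightarrow> Bseq (\<lambda>n. cscale c (x n :: 'a::complex_normed_vector))"
proof -
  assume "Bseq x"
  then obtain K where "\<forall>n. norm (x n) \<le> K" by (auto elim!: BseqE)
  then show ?thesis by (intro BseqI'[where K="cmod c * K"]) (simp add: norm_cscale mult_left_mono)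
qed

lemma Bseq_shift': "Bseq x \<Longrightarrow> Bseq (\<lambda>n. x (n + i) :: 'a::real_normed_vector)"
proof -
  assume "Bseq x"
  then obtain K where "\<forall>n. norm (x n) \<le> K" by (auto elim!: BseqE)
  then show ?thesis by (intro BseqI'[where K="K"]) simp
qed

lemma Bseq_asum: "Bseq y \<Longrightarrow> Bseq (\<lambda>m. asum k m y)"
proof -
  assume "Bseq y"
  then obtain K where "\<forall>n. norm (y n) \<le> K" by (auto elim!: BseqE)
  then show ?thesis by (intro BseqI'[where K="real k * K"]) (rule asum_bound, auto)
qed

lemma Bseq_bound: "Bseq y \<Longrightarrow> (\<And>B. (\<And>m. norm (y m) \<le> B) \<Longrightarrow> P) \<Longrightarrow> P"
  by (auto elim!: BseqE)

lemma p_func_nonneg: "Bseq y \<Longrightarrow> 0 \<le> p_func y"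
  by (rule Bseq_bound, assumption)
     (rule LIMSEQ_le_const[OF p_func_tendsto], auto intro: ss_nonneg)

lemma ss_add:
  assumes "\<And>m. norm (y m) \<le> B1" "\<And>m. norm (z m) \<le> B2"
  shows "ss n (\<lambda>m. y m + z m) \<le> ss n y + ss n z"
proof -
  have "aa n (\<lambda>m. y m + z m) \<le> aa n y + aa n z"
  proof (rule aa_least)
    fix j
    have "asum n j (\<lambda>m. y m + z m) = asum n j y + asum n j z"
      by (simp add: asum_def sum.distrib)
    then have "norm (asum n j (\<lambda>m. y m + z m)) \<le> norm (asum n j y) + norm (asum n j z)"
      by (simp add: norm_triangle_ineq)
    also have "\<dots> \<le> aa n y + aa n z" by (intro add_mono aa_upper[OF assms(1)] aa_upper[OF assms(2)])
    finally show "norm (asum n j (\<lambda>m. y m + z m)) \<le> aa n y + aa n z" .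
  qed
  then show ?thesis unfolding ss_def add_divide_distrib[symmetric]
    by (intro divide_right_mono) simp_all
qed

lemma p_func_add:
  assumes "Bseq y" "Bseq z"
  shows "p_func (\<lambda>m. y m + z m) \<le> p_func y + p_func z"
proof -
  obtain B1 where B1: "\<And>m. norm (y m) \<le> B1" using Bseq_bound[OF assms(1)] by blast
  obtain B2 where B2: "\<And>m. norm (z m) \<le> B2" using Bseq_bound[OF assms(2)] by blast
  show ?thesis
    by (rule LIMSEQ_le[OF p_func_tendsto[OF Bseq_plus[OF assms]] tendsto_add[OF p_func_tendsto[OF assms(1)] p_func_tendsto[OF assms(2)]]])
       (use ss_add[OF B1 B2] in auto)
qed

lemma ss_cscale:
  assumes "\<And>m. norm (y m) \<le> B"
  shows "ss n (\<lambda>m. cscale c (y m)) \<le> cmod c * ss n y"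
proof -
  have "aa n (\<lambda>m. cscale c (y m)) \<le> cmod c * aa n y"
  proof (rule aa_least)
    fix j
    have "asum n j (\<lambda>m. cscale c (y m)) = cscale c (asum n j y)"
      by (simp add: asum_def cscale_sum)
    then have "norm (asum n j (\<lambda>m. cscale c (y m))) = cmod c * norm (asum n j y)"
      by (simp add: norm_cscale)
    also have "\<dots> \<le> cmod c * aa n y" by (intro mult_left_mono aa_upper[OF assms]) simp
    finally show "norm (asum n j (\<lambda>m. cscale c (y m))) \<le> cmod c * aa n y" .
  qed
  then show ?thesis unfolding ss_def using divide_right_mono[of _ _ "real n"] by simp
qed

lemma p_func_cscale_le:
  assumes "Bseq y"
  shows "p_func (\<lambda>m. cscale c (y m)) \<le> cmod c * p_func y"
proof -
  obtain B where B: "\<And>m. norm (y m) \<le> B" using Bseq_bound[OF assms] by blast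
  show ?thesis
    by (rule LIMSEQ_le[OF p_func_tendsto[OF Bseq_cscale[OF assms]] tendsto_mult_left[OF p_func_tendsto[OF assms]]])
       (use ss_cscale[OF B] in auto)
qed

lemma p_func_cscale:
  assumes "Bseq y"
  shows "p_func (\<lambda>m. cscale c (y m)) = cmod c * p_func y"
proof (cases "c = 0")
  case True
  have "p_func (\<lambda>m. cscale c (y m)) \<le> 0" using p_func_cscale_le[OF assms, of c] True by simp
  moreover have "0 \<le> p_func (\<lambda>m. cscale c (y m))" by (rule p_func_nonneg[OF Bseq_cscale[OF assms]])
  ultimately show ?thesis using True by simp
next
  case False
  have "(\<lambda>m. cscale (inverse c) (cscale c (y m))) = y"
    using False by (simp add: cscale_cscale cscale_one)
  then have "p_func y \<le> cmod (inverse c) * p_func (\<lambda>m. cscale c (y m))"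
    using p_func_cscale_le[OF Bseq_cscale[OF assms], of "inverse c" c] by simp
  then have "cmod c * p_func y \<le> p_func (\<lambda>m. cscale c (y m))"
    using False by (simp add: norm_divide field_simps)
  with p_func_cscale_le[OF assms, of c] show ?thesis by simp
qed

lemma sup_norm_upper: "Bseq y \<Longrightarrow> norm (y m) \<le> sup_norm y"
  unfolding sup_norm_def
  by (rule cSUP_upper) (auto elim!: BseqE intro: bdd_aboveI2)

lemma p_func_le_sup_norm:
  assumes "Bseq y"
  shows "p_func y \<le> sup_norm y"
proof (rule LIMSEQ_le_const2[OF p_func_tendsto[OF assms]], intro exI allI impI)
  fix n :: nat assume n: "n \<ge> 1"
  have "aa n y \<le> real n * sup_norm y" by (rule aa_le) (rule sup_norm_upper[OF assms])
  then show "ss n y \<le> sup_norm y" using n by (simp add: ss_def divide_simps mult.commute)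
qed

lemma p_func_shift:
  assumes "Bseq y"
  shows "p_func (\<lambda>m. y m - lshift y m) = 0"
proof -
  obtain B where B: "\<And>m. norm (y m) \<le> B" using Bseq_bound[OF assms] by blast
  have ss: "ss n (\<lambda>m. y m - lshift y m) \<le> 2 * B / real n" for n
  proof -
    have "aa n (\<lambda>m. y m - lshift y m) \<le> 2 * B"
    proof (rule aa_least)
      fix j
      have "asum n j (\<lambda>m. y m - lshift y m) = (\<Sum>i<n. y (i + j) - y (Suc i + j))"
        by (simp add: asum_def lshift_def)
      also have "\<dots> = y (0 + j) - y (n + j)"
        by (rule sum_lessThan_telescope'[where f="\<lambda>i. y (i + j)"])
      finally have "norm (asum n j (\<lambda>m. y m - lshift y m)) = norm (y j - y (n + j))" by simp
      also have "\<dots> \<le> norm (y j) + norm (y (n + j))" by (rule norm_triangle_ineq4)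
      also have "\<dots> \<le> 2 * B" using B[of j] B[of "n + j"] by simp
      finally show "norm (asum n j (\<lambda>m. y m - lshift y m)) \<le> 2 * B" .
    qed
    then show ?thesis unfolding ss_def by (intro divide_right_mono) simp_all
  qed
  have bs: "Bseq (\<lambda>m. y m - lshift y m)"
  proof (rule BseqI'[where K="2 * B"])
    fix m
    have "norm (y m - lshift y m) \<le> norm (y m) + norm (y (Suc m))"
      unfolding lshift_def by (rule norm_triangle_ineq4)
    also have "\<dots> \<le> 2 * B" using B[of m] B[of "Suc m"] by simp
    finally show "norm (y m - lshift y m) \<le> 2 * B" .
  qed
  have "p_func (\<lambda>m. y m - lshift y m) \<le> 0"
    by (rule LIMSEQ_le[OF p_func_tendsto[OF bs] lim_const_over_n[of "2 * B"]]) (use ss in auto)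
  moreover have "0 \<le> p_func (\<lambda>m. y m - lshift y m)" by (rule p_func_nonneg[OF bs])
  ultimately show ?thesis by simp
qed



lemma cscale_neg1: "cscale (-1) (v :: 'a::complex_normed_vector) = - v"
  using cscale_of_real[of "-1" v] by simp

lemma cscale_scaleR_comm: "cscale c (r *\<^sub>R v :: 'a::complex_normed_vector) = r *\<^sub>R cscale c v"
proof -
  have "cscale c (r *\<^sub>R v) = cscale c (cscale (of_real r) v)" by (simp add: cscale_of_real)
  also have "\<dots> = cscale (of_real r) (cscale c v)" by (simp add: cscale_cscale mult.commute)
  finally show ?thesis by (simp add: cscale_of_real)
qed

lemma cscale_ii: "cscale \<i> (cscale \<i> v) = - (v :: 'a::complex_normed_vector)"
  by (simp add: cscale_cscale cscale_neg1)

lemma Bseq_const': "Bseq (\<lambda>n. v :: 'a::real_normed_vector)"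
  by (rule BseqI'[where K="norm v"]) simp

lemma Bseq_lshift: "Bseq z \<Longrightarrow> Bseq (lshift (z :: nat \<Rightarrow> 'a::real_normed_vector))"
  using Bseq_shift'[of z 1] by (simp add: lshift_def)

context
  fixes L :: "(nat \<Rightarrow> 'a::complex_normed_vector) \<Rightarrow> complex"
  assumes BL: "banach_limit_functional L"
begin

lemma BL_add: "Bseq x \<Longrightarrow> Bseq y \<Longrightarrow> L (\<lambda>n. x n + y n) = L x + L y"
  using BL by (simp add: banach_limit_functional_def)
lemma BL_scale: "Bseq x \<Longrightarrow> L (\<lambda>n. cscale c (x n)) = c * L x"
  using BL by (simp add: banach_limit_functional_def)
lemma BL_norm: "Bseq x \<Longrightarrow> cmod (L x) \<le> sup_norm x"
  using BL by (simp add: banach_limit_functional_def)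
lemma BL_shift: "Bseq x \<Longrightarrow> L (lshift x) = L x"
  using BL by (simp add: banach_limit_functional_def)

lemma BL_zero: "L (\<lambda>n. 0) = 0"
  using BL_scale[OF Bseq_const'[of 0], of 0] by simp

lemma BL_shiftk: "Bseq y \<Longrightarrow> L (\<lambda>m. y (m + i)) = L y"
proof (induction i)
  case 0 then show ?case by simp
next
  case (Suc i)
  have "(\<lambda>m. y (m + Suc i)) = lshift (\<lambda>m. y (m + i))" by (simp add: lshift_def)
  then show ?case using BL_shift[OF Bseq_shift'[OF Suc.prems, of i]] Suc by simp
qed

lemma BL_asum: "Bseq y \<Longrightarrow> L (\<lambda>m. asum k m y) = of_nat k * L y"
proof (induction k)
  case 0 then show ?case by (simp add: asum_def BL_zero)
next
  case (Suc k)
  have "(\<lambda>m. asum (Suc k) m y) = (\<lambda>m. asum k m y + y (m + k))" by (simp add: asum_def add.commute)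
  then have "L (\<lambda>m. asum (Suc k) m y) = L (\<lambda>m. asum k m y) + L (\<lambda>m. y (m + k))"
    using BL_add[OF Bseq_asum[OF Suc.prems] Bseq_shift'[OF Suc.prems]] by simp
  then show ?case using Suc BL_shiftk[OF Suc.prems] by (simp add: algebra_simps)
qed

lemma BL_bound:
  assumes y: "Bseq y" and n: "n \<ge> 1"
  shows "cmod (L y) \<le> ss n y"
proof -
  obtain B where B: "\<And>m. norm (y m) \<le> B" using Bseq_bound[OF y] by blast
  define w where "w = (\<lambda>m. cscale (of_real (1 / real n)) (asum n m y))"
  have bw: "Bseq w" unfolding w_def by (intro Bseq_cscale Bseq_asum y)
  have "L w = of_real (1 / real n) * (of_nat n * L y)"
    unfolding w_def using BL_scale[OF Bseq_asum[OF y]] BL_asum[OF y] by simp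
  also have "\<dots> = L y" using n by (simp add: field_simps)
  finally have Lw: "L w = L y" .
  have "sup_norm w \<le> ss n y"
    unfolding sup_norm_def
  proof (rule cSUP_least)
    fix m
    have "norm (w m) = norm (asum n m y) / real n" unfolding w_def by (simp add: norm_cscale norm_divide)
    also have "\<dots> \<le> aa n y / real n" by (intro divide_right_mono aa_upper[OF B]) simp
    finally show "norm (w m) \<le> ss n y" by (simp add: ss_def)
  qed simp
  then show ?thesis using BL_norm[OF bw] Lw by simp
qed

end



lemma plus_fun_lam: "(a + b) = (\<lambda>n. a n + b n)" by (simp add: fun_eq_iff)
lemma scaleR_fun_lam: "(c *\<^sub>R a) = (\<lambda>n. c *\<^sub>R a n)" by (simp add: fun_eq_iff)

lemma Bseq_scaleR_fun: "Bseq a \<Longrightarrow> Bseq (c *\<^sub>R (a :: nat \<Rightarrow> 'a::complex_normed_vector))"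
  unfolding scaleR_fun_lam using Bseq_cscale[of a "of_real c"] by (simp add: cscale_of_real)

lemma exists_BL:
  fixes y :: "nat \<Rightarrow> 'a::complex_normed_vector"
  assumes y: "Bseq y" and py: "p_func y \<noteq> 0"
  shows "\<exists>L. banach_limit_functional L \<and> L y \<noteq> 0"
proof -
  define S where "S = {z :: nat \<Rightarrow> 'a. Bseq z}"
  have S: "subspace S"
    unfolding subspace_def S_def
  proof (intro conjI ballI allI; clarsimp)
    show "Bseq (0 :: nat \<Rightarrow> 'a)" using Bseq_const'[of "0::'a"] by (simp add: zero_fun_def)
  next
    fix a b :: "nat \<Rightarrow> 'a" assume "Bseq a" "Bseq b"
    then show "Bseq (a + b)" unfolding plus_fun_lam by (rule Bseq_plus)
  next
    fix c :: real and a :: "nat \<Rightarrow> 'a" assume "Bseq a"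
    then show "Bseq (c *\<^sub>R a)" unfolding scaleR_fun_lam
      using Bseq_cscale[of a "of_real c"] by (simp add: cscale_of_real)
  qed
  have q: "sublin S p_func"
    unfolding sublin_def S_def
  proof (intro conjI ballI allI impI; clarsimp)
    fix a b :: "nat \<Rightarrow> 'a" assume "Bseq a" "Bseq b"
    then show "p_func (a + b) \<le> p_func a + p_func b" unfolding plus_fun_lam by (rule p_func_add)
  next
    fix c :: real and a :: "nat \<Rightarrow> 'a" assume c: "c > 0" and a: "Bseq a"
    have "p_func (c *\<^sub>R a) = p_func (\<lambda>n. cscale (of_real c) (a n))"
      unfolding scaleR_fun_lam by (simp add: cscale_of_real)
    also have "\<dots> = c * p_func a" using p_func_cscale[OF a] c by simp
    finally show "p_func (c *\<^sub>R a) \<le> c * p_func a" by simp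
  qed
  obtain f where fadd: "\<forall>a\<in>S. \<forall>b\<in>S. f (a + b) = f a + f b"
    and fscale: "\<forall>c. \<forall>a\<in>S. f (c *\<^sub>R a) = c * f a"
    and fq: "\<forall>a\<in>S. f a \<le> p_func a" and fy: "f y = p_func y"
    using hahn_banach_point[OF S q] y S_def by blast
  have flin: "f (\<lambda>n. r *\<^sub>R a n + s *\<^sub>R b n) = r * f a + s * f b" if "Bseq a" "Bseq b" for r s a b
  proof -
    have "(\<lambda>n. r *\<^sub>R a n + s *\<^sub>R b n) = r *\<^sub>R a + s *\<^sub>R b" by (simp add: fun_eq_iff)
    moreover have "r *\<^sub>R a \<in> S" "s *\<^sub>R b \<in> S" using that by (auto simp: S_def Bseq_scaleR_fun)
    ultimately show ?thesis using fadd fscale that by (simp add: S_def)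
  qed
  have fq': "Bseq a \<Longrightarrow> f a \<le> p_func a" for a using fq by (simp add: S_def)
  have fshift: "f (lshift w) = f w" if w: "Bseq w" for w
  proof -
    have lw: "Bseq (lshift w)" by (rule Bseq_lshift[OF w])
    have d: "Bseq (\<lambda>n. w n - lshift w n)" using Bseq_plus[OF w Bseq_cscale[OF lw, of "-1"]]
      by (simp add: cscale_neg1)
    have "f w - f (lshift w) = f (\<lambda>n. 1 *\<^sub>R w n + (-1) *\<^sub>R lshift w n)" using flin[OF w lw, of 1 "-1"] by simp
    also have "\<dots> \<le> p_func (\<lambda>n. w n - lshift w n)" using fq'[OF d] by simp
    also have "\<dots> = 0" by (rule p_func_shift[OF w])
    finally have 1: "f w \<le> f (lshift w)" by simp
    have "f (lshift w) - f w = f (\<lambda>n. (-1) *\<^sub>R w n + 1 *\<^sub>R lshift w n)" using flin[OF w lw, of "-1" 1] by simp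
    also have "(\<lambda>n. (-1) *\<^sub>R w n + 1 *\<^sub>R lshift w n) = (\<lambda>n. cscale (-1) (w n - lshift w n))"
      by (simp add: cscale_neg1 fun_eq_iff)
    also have "f \<dots> \<le> p_func (\<lambda>n. cscale (-1) (w n - lshift w n))" by (rule fq'[OF Bseq_cscale[OF d]])
    also have "\<dots> = 0" using p_func_cscale[OF d, of "-1"] p_func_shift[OF w] by simp
    finally have 2: "f (lshift w) \<le> f w" by simp
    from 1 2 show ?thesis by simp
  qed
  define L where "L = (\<lambda>z. if Bseq z then Complex (f z) (- f (\<lambda>n. cscale \<i> (z n))) else 0)"
  have ReL: "Re (L z) = f z" if "Bseq z" for z using that by (simp add: L_def)
  have Ladd: "L (\<lambda>n. a n + b n) = L a + L b" if a: "Bseq a" and b: "Bseq b" for a b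
  proof -
    have ab: "Bseq (\<lambda>n. a n + b n)" by (rule Bseq_plus[OF a b])
    have ia: "Bseq (\<lambda>n. cscale \<i> (a n))" "Bseq (\<lambda>n. cscale \<i> (b n))" using a b by (auto intro: Bseq_cscale)
    have "f (\<lambda>n. a n + b n) = f a + f b" using flin[OF a b, of 1 1] by simp
    moreover have "f (\<lambda>n. cscale \<i> (a n + b n)) = f (\<lambda>n. cscale \<i> (a n)) + f (\<lambda>n. cscale \<i> (b n))"
      using flin[OF ia, of 1 1] by (simp add: cscale_add_right)
    ultimately show ?thesis using a b ab by (simp add: L_def complex_eq_iff)
  qed
  have Lscale: "L (\<lambda>n. cscale c (z n)) = c * L z" if z: "Bseq z" for c z
  proof (cases c)
    case (Complex a b)
    define iz where "iz = (\<lambda>n. cscale \<i> (z n))"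
    have biz: "Bseq iz" unfolding iz_def by (rule Bseq_cscale[OF z])
    have cz: "Bseq (\<lambda>n. cscale c (z n))" by (rule Bseq_cscale[OF z])
    have e1: "(\<lambda>n. cscale c (z n)) = (\<lambda>n. a *\<^sub>R z n + b *\<^sub>R iz n)"
      unfolding Complex iz_def by (simp add: cscale_Complex)
    have e2: "(\<lambda>n. cscale \<i> (cscale c (z n))) = (\<lambda>n. (- b) *\<^sub>R z n + a *\<^sub>R iz n)"
      unfolding Complex iz_def
      by (simp add: cscale_Complex cscale_add_right cscale_scaleR_comm cscale_ii fun_eq_iff)
    have f1: "f (\<lambda>n. cscale c (z n)) = a * f z + b * f iz" unfolding e1 by (rule flin[OF z biz])
    have f2: "f (\<lambda>n. cscale \<i> (cscale c (z n))) = - b * f z + a * f iz" unfolding e2 by (rule flin[OF z biz])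
    show ?thesis using z cz f1 f2 unfolding L_def iz_def[symmetric]
      by (simp add: Complex complex_eq_iff algebra_simps)
  qed
  have Lnorm: "cmod (L z) \<le> p_func z" if z: "Bseq z" for z
  proof (cases "L z = 0")
    case True then show ?thesis using p_func_nonneg[OF z] by simp
  next
    case False
    define u where "u = cnj (L z) / of_real (cmod (L z))"
    have u1: "cmod u = 1" using False by (simp add: u_def norm_divide)
    have sq: "L z * cnj (L z) = of_real (cmod (L z)) * of_real (cmod (L z))"
      using complex_norm_square[of "L z"] by (simp add: power2_eq_square)
    have "u * L z = (L z * cnj (L z)) / of_real (cmod (L z))" by (simp add: u_def mult.commute)
    also have "\<dots> = of_real (cmod (L z))" unfolding sq using False by simp
    finally have "u * L z = of_real (cmod (L z))" .
    then have "cmod (L z) = Re (L (\<lambda>n. cscale u (z n)))" using Lscale[OF z, of u] by simp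
    also have "\<dots> = f (\<lambda>n. cscale u (z n))" by (rule ReL[OF Bseq_cscale[OF z]])
    also have "\<dots> \<le> p_func (\<lambda>n. cscale u (z n))" by (rule fq'[OF Bseq_cscale[OF z]])
    also have "\<dots> = p_func z" using p_func_cscale[OF z, of u] u1 by simp
    finally show ?thesis .
  qed
  have "banach_limit_functional L"
    unfolding banach_limit_functional_def
  proof (intro conjI allI impI)
    fix a b :: "nat \<Rightarrow> 'a" assume "Bseq a \<and> Bseq b"
    then show "L (\<lambda>n. a n + b n) = L a + L b" using Ladd by blast
  next
    fix c and z :: "nat \<Rightarrow> 'a" assume "Bseq z"
    then show "L (\<lambda>n. cscale c (z n)) = c * L z" by (rule Lscale)
  next
    fix z :: "nat \<Rightarrow> 'a" assume z: "Bseq z"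
    show "cmod (L z) \<le> sup_norm z" using Lnorm[OF z] p_func_le_sup_norm[OF z] by simp
  next
    fix z :: "nat \<Rightarrow> 'a" assume z: "Bseq z"
    have iz: "Bseq (\<lambda>n. cscale \<i> (z n))" by (rule Bseq_cscale[OF z])
    have "lshift (\<lambda>n. cscale \<i> (z n)) = (\<lambda>n. cscale \<i> (lshift z n))" by (simp add: lshift_def)
    then show "L (lshift z) = L z"
      using z Bseq_lshift[OF z] fshift[OF z] fshift[OF iz] by (simp add: L_def)
  qed
  moreover have "L y \<noteq> 0"
  proof
    assume "L y = 0"
    then have "f y = 0" using ReL[OF y] by simp
    then show False using fy py by simp
  qed
  ultimately show ?thesis by blast
qed

theorem mainTheorem11:
  fixes x :: "nat \<Rightarrow> 'a::complex_normed_vector" and v :: 'a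
  assumes "Bseq x"
  shows "strongly_almost_convergent x v \<longleftrightarrow> p_func (\<lambda>n. x n - v) = 0"
proof -
  define y where "y = (\<lambda>n. x n - v)"
  have yb: "Bseq y" unfolding y_def using Bseq_plus[OF assms Bseq_const'[of "- v"]] by simp
  have xy: "x = (\<lambda>n. y n + v)" by (simp add: y_def)
  have Lx: "L x = L y + L (const_seq v)" if "banach_limit_functional L" for L
    using BL_add[OF that yb Bseq_const'[of v]] xy by (simp add: const_seq_def)
  show ?thesis
    unfolding y_def[symmetric]
  proof
    assume sac: "strongly_almost_convergent x v"
    show "p_func y = 0"
    proof (rule ccontr)
      assume "p_func y \<noteq> 0"
      then obtain L where L: "banach_limit_functional L" "L y \<noteq> 0" using exists_BL[OF yb] by blast
      have "L x = L (const_seq v)" using sac L(1) by (simp add: strongly_almost_convergent_def)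
      with Lx[OF L(1)] L(2) show False by simp
    qed
  next
    assume p0: "p_func y = 0"
    show "strongly_almost_convergent x v"
      unfolding strongly_almost_convergent_def
    proof (intro allI impI)
      fix L :: "(nat \<Rightarrow> 'a) \<Rightarrow> complex" assume L: "banach_limit_functional L"
      have "cmod (L y) \<le> p_func y"
        by (rule LIMSEQ_le_const[OF p_func_tendsto[OF yb]]) (use BL_bound[OF L yb] in auto)
      then have "L y = 0" using p0 by simp
      then show "L x = L (const_seq v)" using Lx[OF L] by simp
    qed
  qed
qed


end
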